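(* Consider the following slotted system. There are $N\ge 2$ users and slots $t=1,\dots,T$. In every slot, independently, the BS schedules one user chosen uniformly at random among the $N$ users. An adversary uses a blocking matrix $\sigma\in\{0,1\}^{N\times T}$, where $\sigma_i(t)=0$ means user $i$'s channel is blocked in slot $t$. Feasibility means $\sum_{i,t}(1-\sigma_i(t))\le\alpha T$ and at most one user is blocked per slot, where $0<\alpha<1$ and $\alpha T\in\mathbb{Z}$. The ages satisfy $a_i(1)=1$ and $a_i(t+1)=1$ if user $i$ is scheduled in slot $t$ and $\sigma_i(t)=1$, and $a_i(t+1)=a_i(t)+1$ otherwise. The average age is $\Delta^{\sigma}=\frac{1}{T}\sum_{t=1}^T\frac1N\sum_{i=1}^N\mathbb{E}[a_i(t)]$. Then for every feasible $\sigma$, $\Delta^{\sigma}\le \frac{T+1}{2N}+(N-1)$.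
   Context: The expectation is over the random scheduling. *)

theory Defs
  imports "HOL-Probability.Probability"
begin

text \<open>Users are 1..N, slots are 1..T. A schedule s maps each slot t to the
user s t scheduled in that slot. The blocking matrix sigma i t is in {0,1};
sigma i t = 0 means user i is blocked in slot t.\<close>

text \<open>age_aux sigma s i k is the age a_i(k+1).\<close>
primrec age_aux :: "(nat \<Rightarrow> nat \<Rightarrow> int) \<Rightarrow> (nat \<Rightarrow> nat) \<Rightarrow> nat \<Rightarrow> nat \<Rightarrow> nat" where
  "age_aux \<sigma> s i 0 = 1"
| "age_aux \<sigma> s i (Suc k) =
     (if s (Suc k) = i \<and> \<sigma> i (Suc k) = 1 then 1 else age_aux \<sigma> s i k + 1)"

definition age :: "(nat \<Rightarrow> nat \<Rightarrow> int) \<Rightarrow> (nat \<Rightarrow> nat) \<Rightarrow> nat \<Rightarrow> nat \<Rightarrow> nat" where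
  "age \<sigma> s i t = age_aux \<sigma> s i (t - 1)"

definition sched_pmf :: "nat \<Rightarrow> nat \<Rightarrow> (nat \<Rightarrow> nat) pmf" where
  "sched_pmf N T = Pi_pmf {1..T} 0 (\<lambda>_. pmf_of_set {1..N})"

definition feasible :: "nat \<Rightarrow> nat \<Rightarrow> real \<Rightarrow> (nat \<Rightarrow> nat \<Rightarrow> int) \<Rightarrow> bool" where
  "feasible N T \<alpha> \<sigma> \<longleftrightarrow>
     (\<forall>i\<in>{1..N}. \<forall>t\<in>{1..T}. \<sigma> i t \<in> {0, 1}) \<and>
     real_of_int (\<Sum>i\<in>{1..N}. \<Sum>t\<in>{1..T}. 1 - \<sigma> i t) \<le> \<alpha> * real T \<and>
     (\<forall>t\<in>{1..T}. card {i\<in>{1..N}. \<sigma> i t = 0} \<le> 1)"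

definition avg_age :: "nat \<Rightarrow> nat \<Rightarrow> (nat \<Rightarrow> nat \<Rightarrow> int) \<Rightarrow> real" where
  "avg_age N T \<sigma> = (1 / real T) * (\<Sum>t\<in>{1..T}. (1 / real N) *
      (\<Sum>i\<in>{1..N}. measure_pmf.expectation (sched_pmf N T) (\<lambda>s. real (age \<sigma> s i t))))"

end

theory Submission
  imports Defs
begin

lemma age_aux_sum:
  "real (age_aux \<sigma> s i m) =
     (\<Sum>j\<in>{1..m+1}. \<Prod>u\<in>{j..m}. (if s u = i \<and> \<sigma> i u = 1 then 0 else 1::real))"
proof (induction m)
  case 0
  then show ?case by simp
next
  case (Suc m)
  define h where "h = (\<lambda>u. if s u = i \<and> \<sigma> i u = 1 then 0 else (1::real))"
  have split: "{1..Suc m + 1} = insert (Suc m + 1) {1..m+1}" by auto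
  have "(\<Sum>j\<in>{1..Suc m+1}. \<Prod>u\<in>{j..Suc m}. h u) = 1 + (\<Sum>j\<in>{1..m+1}. \<Prod>u\<in>{j..Suc m}. h u)"
    using split by simp
  also have "(\<Sum>j\<in>{1..m+1}. \<Prod>u\<in>{j..Suc m}. h u) = (\<Sum>j\<in>{1..m+1}. h (Suc m) * (\<Prod>u\<in>{j..m}. h u))"
  proof (intro sum.cong refl)
    fix j assume "j \<in> {1..m+1}"
    then have "{j..Suc m} = insert (Suc m) {j..m}" by auto
    then show "(\<Prod>u\<in>{j..Suc m}. h u) = h (Suc m) * (\<Prod>u\<in>{j..m}. h u)" by simp
  qed
  also have "\<dots> = h (Suc m) * real (age_aux \<sigma> s i m)"
    by (simp add: sum_distrib_left Suc.IH h_def)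
  finally have "(\<Sum>j\<in>{1..Suc m+1}. \<Prod>u\<in>{j..Suc m}. h u) = 1 + h (Suc m) * real (age_aux \<sigma> s i m)" .
  then show ?case by (simp add: h_def split: if_splits)
qed

lemma window_exp:
  assumes W: "W \<subseteq> {1..T}" and i: "i \<in> {1..N}"
  shows "measure_pmf.expectation (sched_pmf N T)
           (\<lambda>s. \<Prod>u\<in>W. (if s u = i \<and> \<sigma> i u = 1 then 0 else 1::real))
         = (\<Prod>u\<in>W. if \<sigma> i u = 1 then 1 - 1 / real N else 1)"
proof -
  define G where "G = (\<lambda>u v. if u \<in> W \<and> v = i \<and> \<sigma> i u = 1 then 0 else (1::real))"
  have eq: "(\<Prod>u\<in>W. (if s u = i \<and> \<sigma> i u = 1 then 0 else 1::real)) = (\<Prod>u\<in>{1..T}. G u (s u))" for s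
  proof -
    have "(\<Prod>u\<in>{1..T}. G u (s u)) = (\<Prod>u\<in>W. G u (s u))"
      by (rule prod.mono_neutral_right) (use W in \<open>auto simp: G_def\<close>)
    then show ?thesis by (auto simp: G_def intro!: prod.cong)
  qed
  have ne: "{1..N} \<noteq> {}" using i by auto
  have fs: "finite (set_pmf (pmf_of_set {1..N}))" using ne by simp
  have "measure_pmf.expectation (sched_pmf N T)
           (\<lambda>s. \<Prod>u\<in>W. (if s u = i \<and> \<sigma> i u = 1 then 0 else 1::real))
        = measure_pmf.expectation (sched_pmf N T) (\<lambda>s. \<Prod>u\<in>{1..T}. G u (s u))"
    by (simp add: eq)
  also have "\<dots> = (\<Prod>u\<in>{1..T}. measure_pmf.expectation (pmf_of_set {1..N}) (G u))"
    unfolding sched_pmf_def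
    by (rule expectation_prod_Pi_pmf) (use fs in \<open>auto simp: G_def intro!: integrable_measure_pmf_finite\<close>)
  also have "\<dots> = (\<Prod>u\<in>{1..T}. if u \<in> W \<and> \<sigma> i u = 1 then 1 - 1 / real N else 1)"
  proof (intro prod.cong refl)
    fix u
    have "measure_pmf.expectation (pmf_of_set {1..N}) (G u) = sum (G u) {1..N} / real N"
      using ne by (simp add: integral_pmf_of_set)
    also have "\<dots> = (if u \<in> W \<and> \<sigma> i u = 1 then 1 - 1 / real N else 1)"
    proof (cases "u \<in> W \<and> \<sigma> i u = 1")
      case True
      have "sum (G u) {1..N} = (\<Sum>v\<in>{1..N}. if v = i then 0 else 1)"
        using True by (simp add: G_def)
      also have "\<dots> = real N - 1"
        using i by (simp add: sum.If_cases Diff_eq[symmetric] card_Diff_singleton)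
      finally show ?thesis using True ne by (simp add: field_simps)
    next
      case False
      then have "G u = (\<lambda>_. 1)" by (auto simp: G_def fun_eq_iff)
      then show ?thesis using False ne by simp
    qed
    finally show "measure_pmf.expectation (pmf_of_set {1..N}) (G u) =
      (if u \<in> W \<and> \<sigma> i u = 1 then 1 - 1 / real N else 1)" .
  qed
  also have "\<dots> = (\<Prod>u\<in>W. if \<sigma> i u = 1 then 1 - 1 / real N else 1)"
  proof -
    have "(\<Prod>u\<in>{1..T}. if u \<in> W \<and> \<sigma> i u = 1 then 1 - 1 / real N else 1)
       = (\<Prod>u\<in>W. if u \<in> W \<and> \<sigma> i u = 1 then 1 - 1 / real N else (1::real))"
      by (rule prod.mono_neutral_right) (use W in auto)
    then show ?thesis by (auto intro!: prod.cong)
  qed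
  finally show ?thesis .
qed


lemma S_bound:
  fixes N :: nat and \<sigma> :: "nat \<Rightarrow> nat \<Rightarrow> int"
  assumes "finite W" and N1: "N \<ge> 1"
    and "\<And>u. u \<in> W \<Longrightarrow> card {i\<in>{1..N}. \<sigma> i u \<noteq> 1} \<le> 1"
  shows "(\<Sum>i\<in>{1..N}. \<Prod>u\<in>W. (if \<sigma> i u = 1 then 1 - 1/real N else 1))
           \<le> 1 + (real N - 1) * (1 - 1/real N) ^ card W"
  using assms(1,3)
proof (induction W rule: finite_induct)
  case empty
  then show ?case by simp
next
  case (insert x F)
  define p where "p = 1 - 1/real N"
  define f where "f = (\<lambda>i u. if \<sigma> i u = 1 then p else (1::real))"
  have p0: "0 \<le> p" and p1: "p \<le> 1" using N1 by (auto simp: p_def)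
  define P where "P = (\<lambda>i. \<Prod>u\<in>F. f i u)"
  have P0: "0 \<le> P i" and P1: "P i \<le> 1" for i
    unfolding P_def f_def using p0 p1 by (auto intro!: prod_nonneg prod_le_1)
  have IH: "(\<Sum>i\<in>{1..N}. P i) \<le> 1 + (real N - 1) * p ^ card F"
    using insert.IH insert.prems unfolding P_def f_def p_def by auto
  have "(\<Sum>i\<in>{1..N}. \<Prod>u\<in>insert x F. f i u) = (\<Sum>i\<in>{1..N}. f i x * P i)"
    using insert.hyps by (simp add: P_def)
  also have "\<dots> \<le> (\<Sum>i\<in>{1..N}. p * P i + (if \<sigma> i x \<noteq> 1 then 1 - p else 0))"
  proof (rule sum_mono)
    fix i
    show "f i x * P i \<le> p * P i + (if \<sigma> i x \<noteq> 1 then 1 - p else 0)"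
    proof -
      have "0 \<le> (1-p)*(1-P i)" using P1[of i] p1 by simp
      then show ?thesis by (auto simp: f_def algebra_simps)
    qed
  qed
  also have "\<dots> = p * (\<Sum>i\<in>{1..N}. P i) + (\<Sum>i\<in>{1..N}. if \<sigma> i x \<noteq> 1 then 1 - p else 0)"
    by (simp add: sum.distrib sum_distrib_left)
  also have "(\<Sum>i\<in>{1..N}. if \<sigma> i x \<noteq> 1 then 1 - p else 0) = (1 - p) * real (card {i\<in>{1..N}. \<sigma> i x \<noteq> 1})"
    by (simp add: sum.inter_filter[symmetric])
  also have "\<dots> \<le> 1 - p"
    using insert.prems[of x] p1 by (simp add: mult_left_le)
  finally have "(\<Sum>i\<in>{1..N}. \<Prod>u\<in>insert x F. f i u) \<le> p * (\<Sum>i\<in>{1..N}. P i) + (1 - p)" by simp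
  also have "\<dots> \<le> p * (1 + (real N - 1) * p ^ card F) + (1 - p)"
    using IH p0 by (simp add: mult_left_mono)
  also have "\<dots> = 1 + (real N - 1) * p ^ card (insert x F)"
    using insert.hyps by (simp add: algebra_simps)
  finally show ?case unfolding f_def p_def .
qed


lemma prod01_abs: "\<bar>\<Prod>u\<in>A. (if P u then 0 else 1::real)\<bar> \<le> 1"
  by (induction A rule: infinite_finite_induct) (auto simp: abs_mult)

lemma geo_sum:
  fixes p :: real
  shows "(\<Sum>j\<in>{1..t}. p ^ (t - j)) * (1 - p) = 1 - p ^ t"
proof (induction t)
  case 0
  then show ?case by simp
next
  case (Suc t)
  have split: "{1..Suc t} = insert (Suc t) {1..t}" by auto
  have "(\<Sum>j\<in>{1..Suc t}. p ^ (Suc t - j)) = 1 + (\<Sum>j\<in>{1..t}. p ^ (Suc t - j))"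
    using split by simp
  also have "(\<Sum>j\<in>{1..t}. p ^ (Suc t - j)) = p * (\<Sum>j\<in>{1..t}. p ^ (t - j))"
    unfolding sum_distrib_left by (intro sum.cong refl) (simp add: Suc_diff_le)
  finally have "(\<Sum>j\<in>{1..Suc t}. p ^ (Suc t - j)) = 1 + p * (\<Sum>j\<in>{1..t}. p ^ (t - j))" .
  then have "(\<Sum>j\<in>{1..Suc t}. p ^ (Suc t - j)) * (1 - p) = (1 - p) + p * ((\<Sum>j\<in>{1..t}. p ^ (t - j)) * (1 - p))"
    by (simp add: algebra_simps)
  also have "\<dots> = (1 - p) + p * (1 - p ^ t)" by (simp only: Suc.IH)
  also have "\<dots> = 1 - p ^ Suc t" by (simp add: algebra_simps)
  finally show ?case .
qed

lemma gauss_real: "(\<Sum>t\<in>{1..T}. real t) = real T * (real T + 1) / 2"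
proof (induction T)
  case 0
  then show ?case by simp
next
  case (Suc T)
  have "{1..Suc T} = insert (Suc T) {1..T}" by auto
  then show ?case using Suc.IH by (simp add: field_simps)
qed

theorem theorem2:
  fixes N T :: nat and \<alpha> :: real and \<sigma> :: "nat \<Rightarrow> nat \<Rightarrow> int"
  assumes "N \<ge> 2" and "T \<ge> 1"
    and "0 < \<alpha>" and "\<alpha> < 1" and "\<alpha> * real T \<in> \<int>"
    and "feasible N T \<alpha> \<sigma>"
  shows "avg_age N T \<sigma> \<le> (real T + 1) / (2 * real N) + (real N - 1)"
proof -
  define p where "p = 1 - 1 / real N"
  have N1: "N \<ge> 1" using assms(1) by simp
  have p0: "0 \<le> p" and p1: "p < 1" using assms(1) by (auto simp: p_def)
  have vals: "\<And>i u. i \<in> {1..N} \<Longrightarrow> u \<in> {1..T} \<Longrightarrow> \<sigma> i u \<in> {0, 1}"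
    and card1: "\<And>u. u \<in> {1..T} \<Longrightarrow> card {i\<in>{1..N}. \<sigma> i u = 0} \<le> 1"
    using assms(6) unfolding feasible_def by auto
  have blk: "card {i\<in>{1..N}. \<sigma> i u \<noteq> 1} \<le> 1" if "u \<in> {1..T}" for u
  proof -
    have "{i\<in>{1..N}. \<sigma> i u \<noteq> 1} = {i\<in>{1..N}. \<sigma> i u = 0}"
      using vals[OF _ that] by auto
    then show ?thesis using card1[OF that] by simp
  qed
  have geo: "(\<Sum>j\<in>{1..t}. p ^ (t - j)) \<le> real N" for t
  proof -
    have "(\<Sum>j\<in>{1..t}. p ^ (t - j)) * (1 - p) \<le> 1"
      using geo_sum[of p t] p0 by simp
    then show ?thesis using assms(1) by (simp add: p_def field_simps)
  qed
  have X: "(\<Sum>i\<in>{1..N}. measure_pmf.expectation (sched_pmf N T) (\<lambda>s. real (age \<sigma> s i t)))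
             \<le> real t + (real N - 1) * real N" if t: "t \<in> {1..T}" for t
  proof -
    have E: "measure_pmf.expectation (sched_pmf N T) (\<lambda>s. real (age \<sigma> s i t))
           = (\<Sum>j\<in>{1..t}. \<Prod>u\<in>{j..t-1}. (if \<sigma> i u = 1 then p else 1))" if i: "i \<in> {1..N}" for i
    proof -
      have "measure_pmf.expectation (sched_pmf N T) (\<lambda>s. real (age \<sigma> s i t))
          = measure_pmf.expectation (sched_pmf N T)
              (\<lambda>s. \<Sum>j\<in>{1..t}. \<Prod>u\<in>{j..t-1}. (if s u = i \<and> \<sigma> i u = 1 then 0 else 1::real))"
        using t by (simp add: age_def age_aux_sum)
      also have "\<dots> = (\<Sum>j\<in>{1..t}. measure_pmf.expectation (sched_pmf N T)
              (\<lambda>s. \<Prod>u\<in>{j..t-1}. (if s u = i \<and> \<sigma> i u = 1 then 0 else 1::real)))"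
        by (rule Bochner_Integration.integral_sum)
           (auto intro!: measure_pmf.integrable_const_bound[where B=1] AE_I2 prod01_abs)
      also have "\<dots> = (\<Sum>j\<in>{1..t}. \<Prod>u\<in>{j..t-1}. (if \<sigma> i u = 1 then p else 1))"
        by (unfold p_def, intro sum.cong refl, subst window_exp[OF _ i]) (use t in auto)
      finally show ?thesis .
    qed
    have "(\<Sum>i\<in>{1..N}. measure_pmf.expectation (sched_pmf N T) (\<lambda>s. real (age \<sigma> s i t)))
        = (\<Sum>j\<in>{1..t}. \<Sum>i\<in>{1..N}. \<Prod>u\<in>{j..t-1}. (if \<sigma> i u = 1 then p else 1))"
      by (simp add: E) (rule sum.swap)
    also have "\<dots> \<le> (\<Sum>j\<in>{1..t}. 1 + (real N - 1) * p ^ (t - j))"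
    proof (rule sum_mono)
      fix j assume j: "j \<in> {1..t}"
      have "(\<Sum>i\<in>{1..N}. \<Prod>u\<in>{j..t-1}. (if \<sigma> i u = 1 then p else 1))
          \<le> 1 + (real N - 1) * p ^ card {j..t-1}"
        unfolding p_def by (rule S_bound) (use N1 blk t j in auto)
      moreover have "card {j..t-1} = t - j" using t j by auto
      ultimately show "(\<Sum>i\<in>{1..N}. \<Prod>u\<in>{j..t-1}. (if \<sigma> i u = 1 then p else 1))
          \<le> 1 + (real N - 1) * p ^ (t - j)" by simp
    qed
    also have "\<dots> = real t + (real N - 1) * (\<Sum>j\<in>{1..t}. p ^ (t - j))"
      by (simp add: sum.distrib sum_distrib_left)
    also have "\<dots> \<le> real t + (real N - 1) * real N"
      using geo[of t] assms(1) by (simp add: mult_left_mono)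
    finally show ?thesis .
  qed
  have "avg_age N T \<sigma> = (1 / real T) * (1 / real N) * (\<Sum>t\<in>{1..T}.
      (\<Sum>i\<in>{1..N}. measure_pmf.expectation (sched_pmf N T) (\<lambda>s. real (age \<sigma> s i t))))"
    unfolding avg_age_def by (simp add: sum_distrib_left)
  also have "\<dots> \<le> (1 / real T) * (1 / real N) * (\<Sum>t\<in>{1..T}. real t + (real N - 1) * real N)"
    by (intro mult_left_mono sum_mono X) auto
  also have "\<dots> = (1 / real T) * (1 / real N) * (real T * (real T + 1) / 2 + real T * ((real N - 1) * real N))"
    by (subst sum.distrib, subst gauss_real) simp
  also have "\<dots> = (real T + 1) / (2 * real N) + (real N - 1)"
    using assms(1,2) by (simp add: field_simps)
  finally show ?thesis .
qed

end
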